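(* Let $n\in\mathbb{N}$. (i) Let $S$ be a pseudo-symmetric numerical semigroup and $A\subseteq\{x\in S\mid \frac{\mathrm{F}(S)}{2}<x<\mathrm{F}(S)\}$ with $\#A=n$ such that $S\setminus A$ is a numerical semigroup. Then $\mathrm{l}(S\setminus A)=2n+1$. (ii) Conversely, for every numerical semigroup $T$ with $\mathrm{l}(T)=2n+1$ there exist a pseudo-symmetric numerical semigroup $S$ with $\mathrm{F}(S)=\mathrm{F}(T)$ and a set $A\subseteq\{x\in S\mid \frac{\mathrm{F}(S)}{2}<x<\mathrm{F}(S)\}$ with $\#A=n$ such that $T=S\setminus A$.
   Context: A numerical semigroup is a subset $S\subseteq\mathbb{N}$ closed under addition with $0\in S$ and $\mathbb{N}\setminus S$ finite; $\mathrm{F}(S)=\max(\mathbb{Z}\setminus S)$. $\mathrm{N}(S)=\{s\in S\mid s<\mathrm{F}(S)\}$, $\mathrm{L}(S)=\{x\in\mathbb{N}\setminus S\mid \mathrm{F}(S)-x\notin \mathrm{N}(S)\}$, $\mathrm{l}(S)=\#\mathrm{L}(S)$. A numerical semigroup is irreducible if it is not the intersection of two numerical semigroups properly containing it; pseudo-symmetric means irreducible with even Frobenius number. *)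

theory Defs
  imports Main
begin

definition numerical_semigroup :: "nat set \<Rightarrow> bool" where
  "numerical_semigroup S \<longleftrightarrow> 0 \<in> S \<and> (\<forall>x\<in>S. \<forall>y\<in>S. x + y \<in> S) \<and> finite (UNIV - S)"

text \<open>Frobenius number: the largest integer not in S (equal to -1 when S is all of N,
  since every negative integer lies outside S).\<close>
definition frob :: "nat set \<Rightarrow> int" where
  "frob S = Max (insert (-1) (int ` (UNIV - S)))"

definition smallN :: "nat set \<Rightarrow> nat set" where
  "smallN S = {s \<in> S. int s < frob S}"

definition bigL :: "nat set \<Rightarrow> nat set" where
  "bigL S = {x. x \<notin> S \<and> \<not> (\<exists>s \<in> smallN S. int s = frob S - int x)}"

definition smalll :: "nat set \<Rightarrow> nat" where
  "smalll S = card (bigL S)"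

definition irreducible_ns :: "nat set \<Rightarrow> bool" where
  "irreducible_ns S \<longleftrightarrow> numerical_semigroup S \<and>
     \<not> (\<exists>S1 S2. numerical_semigroup S1 \<and> numerical_semigroup S2 \<and>
          S \<subset> S1 \<and> S \<subset> S2 \<and> S = S1 \<inter> S2)"

definition pseudo_symmetric :: "nat set \<Rightarrow> bool" where
  "pseudo_symmetric S \<longleftrightarrow> irreducible_ns S \<and> even (frob S)"

end

theory Submission
  imports Defs
begin


lemma frob_char:
  assumes "finite (UNIV - S)" "f \<notin> S" "\<forall>x>f. x \<in> S"
  shows "frob S = int f"
  unfolding frob_def
proof (rule Max_eqI)
  show "finite (insert (- 1) (int ` (UNIV - S)))" using assms(1) by simp
  show "int f \<in> insert (- 1) (int ` (UNIV - S))" using assms(2) by simp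
  fix y assume "y \<in> insert (- 1) (int ` (UNIV - S))"
  then show "y \<le> int f" using assms(3) by (auto simp: not_less[symmetric])
qed

lemma frob_UNIV: "frob UNIV = -1"
  unfolding frob_def by simp

lemma frob_exists:
  assumes "numerical_semigroup S" "S \<noteq> UNIV"
  obtains f where "f \<notin> S" "\<forall>x>f. x \<in> S" "frob S = int f"
proof -
  have fin: "finite (UNIV - S)" using assms(1) unfolding numerical_semigroup_def by blast
  have ne: "UNIV - S \<noteq> {}" using assms(2) by blast
  define f where "f = Max (UNIV - S)"
  have "f \<notin> S" using Max_in[OF fin ne] f_def by blast
  moreover have "\<forall>x>f. x \<in> S" using Max_ge[OF fin] f_def by (meson DiffI UNIV_I not_le)
  ultimately show ?thesis using that frob_char[OF fin] by blast
qed

lemma bigL_char: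
  assumes "numerical_semigroup T" "frob T = int f" "\<forall>x>f. x \<in> T"
  shows "bigL T = {x. x \<notin> T \<and> x \<le> f \<and> f - x \<notin> T}"
proof -
  have z: "0 \<in> T" using assms(1) unfolding numerical_semigroup_def by blast
  show ?thesis
  proof (rule set_eqI, rule iffI)
    fix x assume "x \<in> bigL T"
    hence xT: "x \<notin> T" and ns: "\<not> (\<exists>s\<in>T. int s < int f \<and> int s = int f - int x)"
      unfolding bigL_def smallN_def using assms(2) by auto
    have "x \<le> f" using xT assms(3) not_le by blast
    moreover have "x > 0" using xT z by (cases x) auto
    ultimately have "f - x \<notin> T"
    proof -
      assume a: "x \<le> f" "0 < x"
      show "f - x \<notin> T"
      proof
        assume "f - x \<in> T"
        moreover have "int (f - x) < int f" "int (f - x) = int f - int x" using a by auto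
        ultimately show False using ns by blast
      qed
    qed
    thus "x \<in> {x. x \<notin> T \<and> x \<le> f \<and> f - x \<notin> T}" using xT `x \<le> f` by simp
  next
    fix x assume "x \<in> {x. x \<notin> T \<and> x \<le> f \<and> f - x \<notin> T}"
    hence xT: "x \<notin> T" "x \<le> f" "f - x \<notin> T" by auto
    have "\<not> (\<exists>s\<in>T. int s < int f \<and> int s = int f - int x)"
    proof
      assume "\<exists>s\<in>T. int s < int f \<and> int s = int f - int x"
      then obtain s where "s \<in> T" "int s = int f - int x" by blast
      hence "s = f - x" using xT(2) by linarith
      thus False using `s \<in> T` xT(3) by simp
    qed
    thus "x \<in> bigL T" unfolding bigL_def smallN_def using xT(1) assms(2) by auto
  qed
qed


lemma ns_zero: "numerical_semigroup S \<Longrightarrow> 0 \<in> S"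
  unfolding numerical_semigroup_def by blast
lemma ns_add: "numerical_semigroup S \<Longrightarrow> x \<in> S \<Longrightarrow> y \<in> S \<Longrightarrow> x + y \<in> S"
  unfolding numerical_semigroup_def by blast
lemma ns_fin: "numerical_semigroup S \<Longrightarrow> finite (UNIV - S)"
  unfolding numerical_semigroup_def by blast

lemma sym_irred:
  assumes ns: "numerical_semigroup S" and fS: "f \<notin> S" and gt: "\<forall>x>f. x \<in> S"
    and sym: "\<forall>x. x \<notin> S \<longrightarrow> 2 * x \<noteq> f \<longrightarrow> f - x \<in> S"
  shows "irreducible_ns S"
proof -
  have key: "f \<in> S1" if "numerical_semigroup S1" "S \<subset> S1" for S1
  proof -
    obtain x where x: "x \<in> S1" "x \<notin> S" using \<open>S \<subset> S1\<close> by blast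
    have "x \<le> f" using x gt not_le by blast
    show ?thesis
    proof (cases "2 * x = f")
      case True
      then show ?thesis using ns_add[OF that(1) x(1) x(1)] by (simp add: mult_2)
    next
      case False
      hence "f - x \<in> S1" using sym x that(2) by blast
      then have "x + (f - x) \<in> S1" using ns_add[OF that(1) x(1)] by blast
      then show ?thesis using \<open>x \<le> f\<close> by simp
    qed
  qed
  show ?thesis unfolding irreducible_ns_def using ns key fS by blast
qed

lemma irred_sym:
  assumes irr: "irreducible_ns S" and fS: "f \<notin> S" and gt: "\<forall>x>f. x \<in> S"
  shows "\<forall>x. x \<notin> S \<longrightarrow> 2 * x \<noteq> f \<longrightarrow> f - x \<in> S"
proof (rule ccontr)
  assume "\<not> ?thesis"
  then obtain h0 where h0: "h0 \<notin> S" "2 * h0 \<noteq> f" "f - h0 \<notin> S" by blast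
  have ns: "numerical_semigroup S" using irr unfolding irreducible_ns_def by blast
  have z: "0 \<in> S" using ns_zero[OF ns] .
  define B where "B = {h. h \<notin> S \<and> 2 * h \<noteq> f \<and> f - h \<notin> S}"
  have Bsub: "B \<subseteq> UNIV - S" unfolding B_def by blast
  have finB: "finite B" using finite_subset[OF Bsub ns_fin[OF ns]] .
  have h0B: "h0 \<in> B" using h0 unfolding B_def by blast
  define h where "h = Max B"
  have hB: "h \<in> B" using Max_in[OF finB] h0B h_def by blast
  have hmax: "\<And>y. y \<in> B \<Longrightarrow> y \<le> h" using Max_ge[OF finB] h_def by blast
  have hS: "h \<notin> S" "2 * h \<noteq> f" "f - h \<notin> S" using hB unfolding B_def by auto
  have hf: "h \<le> f" using hS(1) gt not_le by blast
  have "f - h \<in> B" using hS hf unfolding B_def by auto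
  hence "f - h \<le> h" using hmax by blast
  hence h2: "f < 2 * h" using hS(2) by linarith
  have hnf: "h \<noteq> f" using hS(3) z by auto
  have fpos: "f > 0" using fS z by (cases f) auto
  define S1 where "S1 = insert h S"
  define S2 where "S2 = insert f S"
  have ns2: "numerical_semigroup S2"
    unfolding numerical_semigroup_def S2_def
  proof (intro conjI ballI)
    show "0 \<in> insert f S" using z by simp
    show "finite (UNIV - insert f S)" by (rule finite_subset[OF _ ns_fin[OF ns]]) blast
    fix x y assume xy: "x \<in> insert f S" "y \<in> insert f S"
    show "x + y \<in> insert f S"
    proof (cases "x = 0 \<or> y = 0")
      case True then show ?thesis using xy by auto
    next
      case False
      then show ?thesis using xy ns_add[OF ns] gt fpos by auto
    qed
  qed
  have ns1: "numerical_semigroup S1"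
    unfolding numerical_semigroup_def S1_def
  proof (intro conjI ballI)
    show "0 \<in> insert h S" using z by simp
    show "finite (UNIV - insert h S)" by (rule finite_subset[OF _ ns_fin[OF ns]]) blast
    have hy: "h + y \<in> insert h S" if y: "y \<in> S" for y
    proof (cases "y = 0")
      case True then show ?thesis by simp
    next
      case False
      show ?thesis
      proof (rule ccontr)
        assume nin: "h + y \<notin> insert h S"
        hence "h + y \<notin> S" by simp
        have "h + y \<noteq> f" using hS(3) y hf by (metis add_diff_cancel_left')
        have "f - (h + y) \<notin> S"
        proof
          assume "f - (h + y) \<in> S"
          hence "f - (h + y) + y \<in> S" using ns_add[OF ns] y by blast
          moreover have "h + y \<le> f" using \<open>h + y \<notin> S\<close> gt not_le by blast
          moreover have "f - (h + y) + y = f - h" using \<open>h + y \<le> f\<close> by simp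
          ultimately have "f - h \<in> S" by simp
          thus False using hS(3) by blast
        qed
        hence "h + y \<in> B" unfolding B_def using \<open>h + y \<notin> S\<close> h2 by auto
        hence "h + y \<le> h" using hmax by blast
        thus False using False by simp
      qed
    qed
    fix x y assume xy: "x \<in> insert h S" "y \<in> insert h S"
    show "x + y \<in> insert h S"
    proof -
      { assume "x = h" "y = h"
        hence ?thesis using gt h2 by auto }
      moreover { assume "x = h" "y \<in> S" hence ?thesis using hy by blast }
      moreover { assume "y = h" "x \<in> S" hence ?thesis using hy[of x] by (simp add: add.commute) }
      moreover { assume "x \<in> S" "y \<in> S" hence ?thesis using ns_add[OF ns] by blast }
      ultimately show ?thesis using xy by blast
    qed
  qed
  have "S \<subset> S1" "S \<subset> S2" "S = S1 \<inter> S2" using hS(1) fS hnf unfolding S1_def S2_def by auto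
  thus False using irr ns1 ns2 unfolding irreducible_ns_def by blast
qed
lemma part1:
  assumes ps: "pseudo_symmetric S"
    and Asub: "A \<subseteq> {x \<in> S. frob S < 2 * int x \<and> int x < frob S}"
    and nsT: "numerical_semigroup (S - A)"
  shows "smalll (S - A) = 2 * card A + 1"
proof -
  have irr: "irreducible_ns S" and ev: "even (frob S)" using ps unfolding pseudo_symmetric_def by auto
  have ns: "numerical_semigroup S" using irr unfolding irreducible_ns_def by blast
  have "S \<noteq> UNIV" using ev frob_UNIV by auto
  then obtain f where fS: "f \<notin> S" and gt: "\<forall>x>f. x \<in> S" and fr: "frob S = int f"
    using frob_exists[OF ns] by blast
  obtain k where fk: "f = 2 * k" using ev fr by (metis even_of_nat evenE)
  have sym: "\<forall>x. x \<notin> S \<longrightarrow> 2 * x \<noteq> f \<longrightarrow> f - x \<in> S" using irred_sym[OF irr fS gt] .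
  have Aprop: "a \<in> S \<and> k < a \<and> a < f" if "a \<in> A" for a
    using Asub that fr fk by auto
  have finA: "finite A" using Aprop by (intro finite_subset[of A "{..<f}"]) auto
  define T where "T = S - A"
  have fT: "f \<notin> T" using fS T_def by blast
  have gtT: "\<forall>x>f. x \<in> T" using gt Aprop T_def by fastforce
  have frT: "frob T = int f" using frob_char[OF ns_fin[OF nsT[folded T_def]] fT gtT] .
  have L: "bigL T = {x. x \<notin> T \<and> x \<le> f \<and> f - x \<notin> T}"
    using bigL_char[OF nsT[folded T_def] frT gtT] .
  have kS: "k \<notin> S" using fS ns_add[OF ns, of k k] fk by (auto simp: mult_2)
  have Anot: "f - a \<notin> S" if "a \<in> A" for a
  proof
    assume "f - a \<in> S"
    hence "a + (f - a) \<in> S" using ns_add[OF ns] Aprop[OF that] by blast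
    thus False using Aprop[OF that] fS by simp
  qed
  have eq: "bigL T = insert k (A \<union> (\<lambda>a. f - a) ` A)"
  proof (rule set_eqI, rule iffI)
    fix x assume "x \<in> bigL T"
    hence x: "x \<notin> T" "x \<le> f" "f - x \<notin> T" using L by auto
    show "x \<in> insert k (A \<union> (\<lambda>a. f - a) ` A)"
    proof (cases "x \<in> A")
      case True then show ?thesis by blast
    next
      case False
      hence xS: "x \<notin> S" using x T_def by blast
      show ?thesis
      proof (cases "2 * x = f")
        case True then show ?thesis using fk by simp
      next
        case False
        hence "f - x \<in> S" using sym xS by blast
        hence "f - x \<in> A" using x(3) T_def by blast
        moreover have "x = f - (f - x)" using x(2) by simp
        ultimately show ?thesis by blast
      qed
    qed
  next
    fix x assume x: "x \<in> insert k (A \<union> (\<lambda>a. f - a) ` A)"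
    show "x \<in> bigL T" unfolding L
    proof (cases "x = k")
      case True then show "x \<in> {x. x \<notin> T \<and> x \<le> f \<and> f - x \<notin> T}"
        using kS fk T_def by auto
    next
      case False
      show "x \<in> {x. x \<notin> T \<and> x \<le> f \<and> f - x \<notin> T}"
      proof (cases "x \<in> A")
        case True then show ?thesis using Aprop[OF True] Anot[OF True] T_def by auto
      next
        case xA: False
        then obtain a where a: "a \<in> A" "x = f - a" using x False by blast
        have "f - x = a" using a Aprop[OF a(1)] by simp
        then show ?thesis using a Anot[OF a(1)] T_def by auto
      qed
    qed
  qed
  have disj1: "k \<notin> A \<union> (\<lambda>a. f - a) ` A" using Aprop fk by fastforce
  have disj2: "A \<inter> (\<lambda>a. f - a) ` A = {}"
  proof (rule ccontr)
    assume "A \<inter> (\<lambda>a. f - a) ` A \<noteq> {}"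
    then obtain a b where "a \<in> A" "b \<in> A" "a = f - b" by blast
    thus False using Aprop[of a] Aprop[of b] fk by linarith
  qed
  have inj: "inj_on (\<lambda>a. f - a) A" using Aprop by (intro inj_onI) (metis diff_diff_cancel less_imp_le_nat)
  have "card (bigL T) = Suc (card A + card A)"
    unfolding eq using disj1 disj2 finA card_Un_disjoint[of A "(\<lambda>a. f - a) ` A"] card_image[OF inj] by simp
  thus ?thesis unfolding smalll_def T_def by simp
qed
lemma part2:
  assumes nsT: "numerical_semigroup T" and lT: "smalll T = 2 * n + 1"
  shows "\<exists>S A. pseudo_symmetric S \<and> frob S = frob T
            \<and> A \<subseteq> {x \<in> S. frob S < 2 * int x \<and> int x < frob S}
            \<and> card A = n \<and> T = S - A"
proof -
  have "T \<noteq> UNIV"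
  proof
    assume "T = UNIV"
    hence "bigL T = {}" unfolding bigL_def by simp
    thus False using lT unfolding smalll_def by simp
  qed
  then obtain f where fT: "f \<notin> T" and gt: "\<forall>x>f. x \<in> T" and fr: "frob T = int f"
    using frob_exists[OF nsT] by blast
  have z: "0 \<in> T" using ns_zero[OF nsT] .
  define L where "L = {x. x \<notin> T \<and> x \<le> f \<and> f - x \<notin> T}"
  have L: "bigL T = L" using bigL_char[OF nsT fr gt] L_def by simp
  have finL: "finite L" unfolding L_def by (rule finite_subset[of _ "{..f}"]) auto
  define A where "A = {x \<in> L. f < 2 * x}"
  define M where "M = {x \<in> L. 2 * x = f}"
  define Lo where "Lo = {x \<in> L. 2 * x < f}"
  have Ldec: "L = M \<union> A \<union> Lo" unfolding M_def A_def Lo_def by auto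
  have Lo_img: "Lo = (\<lambda>a. f - a) ` A"
  proof (rule set_eqI, rule iffI)
    fix x assume "x \<in> Lo"
    hence x: "x \<notin> T" "x \<le> f" "f - x \<notin> T" "2 * x < f" unfolding Lo_def L_def by auto
    have "f - x \<in> A" unfolding A_def L_def using x by auto
    moreover have "x = f - (f - x)" using x by simp
    ultimately show "x \<in> (\<lambda>a. f - a) ` A" by blast
  next
    fix x assume "x \<in> (\<lambda>a. f - a) ` A"
    then obtain a where a: "a \<in> A" "x = f - a" by blast
    hence "a \<notin> T" "a \<le> f" "f - a \<notin> T" "f < 2 * a" unfolding A_def L_def by auto
    thus "x \<in> Lo" unfolding Lo_def L_def using a by auto
  qed
  have inj: "inj_on (\<lambda>a. f - a) A" unfolding A_def L_def
    by (intro inj_onI) (metis (no_types, lifting) diff_diff_cancel mem_Collect_eq)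
  have finA: "finite A" using finL A_def by simp
  have finM: "finite M" using finL M_def by simp
  have finLo: "finite Lo" using finL Lo_def by simp
  have cardLo: "card Lo = card A" using Lo_img card_image[OF inj] by simp
  have "card L = card M + card A + card Lo"
  proof -
    have d1: "(M \<union> A) \<inter> Lo = {}" "M \<inter> A = {}" unfolding M_def A_def Lo_def by auto
    have "card (M \<union> A \<union> Lo) = card (M \<union> A) + card Lo"
      using card_Un_disjoint[OF _ finLo d1(1)] finM finA by simp
    also have "card (M \<union> A) = card M + card A" using card_Un_disjoint[OF finM finA d1(2)] .
    finally show ?thesis using Ldec by simp
  qed
  hence cL: "2 * n + 1 = card M + 2 * card A" using lT L cardLo unfolding smalll_def by simp
  have "M \<subseteq> {f div 2}" unfolding M_def by auto
  hence "card M \<le> 1" using card_mono[of "{f div 2}" M] by simp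
  hence cM: "card M = 1" and cA: "card A = n" using cL by presburger+
  then obtain k where "M = {k}" using card_1_singletonE by blast
  hence kM: "k \<in> M" by simp
  hence fk: "f = 2 * k" unfolding M_def by simp
  have Aprop: "a \<notin> T \<and> a \<le> f \<and> f - a \<notin> T \<and> f < 2 * a \<and> a < f" if "a \<in> A" for a
  proof -
    have "a \<notin> T \<and> a \<le> f \<and> f - a \<notin> T \<and> f < 2 * a" using that unfolding A_def L_def by auto
    moreover have "a \<noteq> f" using calculation z by auto
    ultimately show ?thesis by simp
  qed
  define S where "S = T \<union> A"
  have nsS: "numerical_semigroup S"
    unfolding numerical_semigroup_def
  proof (intro conjI ballI)
    show "0 \<in> S" using z S_def by simp
    show "finite (UNIV - S)" using S_def by (intro finite_subset[OF _ ns_fin[OF nsT]]) auto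
    have mix: "x + y \<in> S" if x: "x \<in> A" and y: "y \<in> T" for x y
    proof (cases "y = 0")
      case True then show ?thesis using x S_def by simp
    next
      case False
      show ?thesis
      proof (rule ccontr)
        assume nin: "x + y \<notin> S"
        hence xyT: "x + y \<notin> T" "x + y \<notin> A" using S_def by auto
        have le: "x + y \<le> f" using xyT gt not_le by blast
        have ne: "x + y \<noteq> f"
        proof
          assume "x + y = f" hence "f - x = y" by simp
          thus False using Aprop[OF x] y by simp
        qed
        have "f - (x + y) \<notin> T"
        proof
          assume "f - (x + y) \<in> T"
          hence "f - (x + y) + y \<in> T" using ns_add[OF nsT] y by blast
          moreover have "f - (x + y) + y = f - x" using le by simp
          ultimately show False using Aprop[OF x] by simp
        qed
        hence "x + y \<in> A" unfolding A_def L_def using xyT le Aprop[OF x] by auto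
        thus False using xyT by blast
      qed
    qed
    fix x y assume xy: "x \<in> S" "y \<in> S"
    show "x + y \<in> S"
    proof -
      { assume "x \<in> A" "y \<in> A"
        hence "x + y > f" using Aprop[of x] Aprop[of y] by linarith
        hence ?thesis using gt S_def by blast }
      moreover { assume "x \<in> A" "y \<in> T" hence ?thesis using mix by blast }
      moreover { assume "y \<in> A" "x \<in> T" hence ?thesis using mix[of y x] by (simp add: add.commute) }
      moreover { assume "x \<in> T" "y \<in> T" hence ?thesis using ns_add[OF nsT] S_def by blast }
      ultimately show ?thesis using xy S_def by blast
    qed
  qed
  have fS: "f \<notin> S" using fT Aprop S_def by blast
  have gtS: "\<forall>x>f. x \<in> S" using gt S_def by blast
  have frS: "frob S = int f" using frob_char[OF ns_fin[OF nsS] fS gtS] .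
  have sym: "\<forall>x. x \<notin> S \<longrightarrow> 2 * x \<noteq> f \<longrightarrow> f - x \<in> S"
  proof (intro allI impI)
    fix x assume x: "x \<notin> S" "2 * x \<noteq> f"
    hence xT: "x \<notin> T" "x \<notin> A" using S_def by auto
    have xle: "x \<le> f" using xT gt not_le by blast
    show "f - x \<in> S"
    proof (cases "f - x \<in> T")
      case True then show ?thesis using S_def by simp
    next
      case False
      hence "x \<in> L" using xT xle L_def by simp
      hence "2 * x < f" using xT(2) x(2) A_def by auto
      hence "f - x \<in> A" unfolding A_def L_def using xT xle False by auto
      thus ?thesis using S_def by simp
    qed
  qed
  have ps: "pseudo_symmetric S" unfolding pseudo_symmetric_def
    using sym_irred[OF nsS fS gtS sym] frS fk by simp
  have Asub: "A \<subseteq> {x \<in> S. frob S < 2 * int x \<and> int x < frob S}"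
  proof
    fix x assume x: "x \<in> A"
    hence "f < 2 * x" "x < f" using Aprop by auto
    hence "int f < 2 * int x" "int x < int f" by linarith+
    thus "x \<in> {x \<in> S. frob S < 2 * int x \<and> int x < frob S}" using x frS S_def by simp
  qed
  have TSA: "T = S - A" using Aprop S_def by auto
  show ?thesis
    apply (rule exI[of _ S], rule exI[of _ A])
    using ps frS fr Asub cA TSA by simp
qed

theorem proposition22:
  fixes n :: nat
  shows "(\<forall>S A. pseudo_symmetric S
            \<and> A \<subseteq> {x \<in> S. frob S < 2 * int x \<and> int x < frob S}
            \<and> card A = n \<and> numerical_semigroup (S - A)
          \<longrightarrow> smalll (S - A) = 2 * n + 1)
       \<and> (\<forall>T. numerical_semigroup T \<and> smalll T = 2 * n + 1 \<longrightarrow>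
          (\<exists>S A. pseudo_symmetric S \<and> frob S = frob T
            \<and> A \<subseteq> {x \<in> S. frob S < 2 * int x \<and> int x < frob S}
            \<and> card A = n \<and> T = S - A))"
  using part1 part2 by blast

end
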